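(* Let $\mathcal G$ be a Hilbert space of arbitrary (finite or infinite) dimension, let $A,B$ be bounded everywhere defined linear operators in $\mathcal G$ such that the linear relation $\Lambda=\{(f,f')\in\mathcal G\oplus\mathcal G:\ Af=Bf'\}$ is closed, and let $R$ be a bounded operator in $\mathcal G$. Then $(\Lambda-R)^{-1}$ is (the graph of) a bounded everywhere defined operator in $\mathcal G$ if and only if $\ker(A-BR)=\{0\}$ and $\operatorname{Ran}B\subset\operatorname{Ran}(A-BR)$.
   Context: A linear relation in $\mathcal G$ is a linear subspace of $\mathcal G\oplus\mathcal G$. For a relation $\Lambda$ and an operator $R$, $\Lambda-R=\{(f,f'-Rf):\ (f,f')\in\Lambda\}$, and the inverse relation of a relation $\Theta$ is $\Theta^{-1}=\{(g,f):(f,g)\in\Theta\}$. *)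

theory Defs
  imports "HOL-Analysis.Analysis"
begin

definition rel_minus_op :: "('a \<times> 'a::real_vector) set \<Rightarrow> ('a \<Rightarrow> 'a) \<Rightarrow> ('a \<times> 'a) set" where
  "rel_minus_op \<Lambda> R = {(f, f' - R f) | f f'. (f, f') \<in> \<Lambda>}"

definition rel_inverse :: "('a \<times> 'a) set \<Rightarrow> ('a \<times> 'a) set" where
  "rel_inverse \<Theta> = {(g, f). (f, g) \<in> \<Theta>}"

definition op_graph :: "('a \<Rightarrow> 'a) \<Rightarrow> ('a \<times> 'a) set" where
  "op_graph T = {(g, T g) | g. True}"

end

theory Submission
  imports Defs
begin

lemma my_summable_Cauchy:
  fixes f :: "nat \<Rightarrow> 'a::{real_normed_vector,complete_space}"
  assumes "\<forall>e>0. \<exists>N. \<forall>m\<ge>N. \<forall>n. norm (sum f {m..<n}) < e"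
  shows "summable f"
proof -
  have "Cauchy (\<lambda>n. sum f {..<n})"
  proof (rule CauchyI)
    fix e :: real
    assume "0 < e"
    then obtain N where N: "\<And>m n. m \<ge> N \<Longrightarrow> norm (sum f {m..<n}) < e"
      using assms by blast
    have "norm (sum f {..<m} - sum f {..<n}) < e" if "m \<ge> N" "n \<ge> N" for m n
    proof (cases m n rule: linorder_class.le_cases)
      assume "m \<le> n"
      then show ?thesis
        by (metis N finite_lessThan lessThan_minus_lessThan lessThan_subset_iff norm_minus_commute sum_diff that(1))
    next
      assume "n \<le> m"
      then show ?thesis
        by (metis N finite_lessThan lessThan_minus_lessThan lessThan_subset_iff sum_diff that(2))
    qed
    then show "\<exists>M. \<forall>m\<ge>M. \<forall>n\<ge>M. norm (sum f {..<m} - sum f {..<n}) < e"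
      by blast
  qed
  then show ?thesis
    by (simp add: summable_iff_convergent Cauchy_convergent_iff)
qed

lemma my_summable_norm_cancel:
  fixes f :: "nat \<Rightarrow> 'a::{real_normed_vector,complete_space}"
  assumes "summable (\<lambda>n. norm (f n))"
  shows "summable f"
proof (rule my_summable_Cauchy, intro allI impI)
  fix e :: real assume "e > 0"
  then obtain N where N: "\<And>m n. m \<ge> N \<Longrightarrow> norm (sum (\<lambda>n. norm (f n)) {m..<n}) < e"
    using assms unfolding summable_Cauchy by blast
  show "\<exists>N. \<forall>m\<ge>N. \<forall>n. norm (sum f {m..<n}) < e"
  proof (intro exI allI impI)
    fix m n assume "m \<ge> N"
    have "norm (sum f {m..<n}) \<le> sum (\<lambda>n. norm (f n)) {m..<n}" by (rule norm_sum)
    also have "\<dots> \<le> norm (sum (\<lambda>n. norm (f n)) {m..<n})" by simp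
    also have "\<dots> < e" using N \<open>m \<ge> N\<close> by blast
    finally show "norm (sum f {m..<n}) < e" .
  qed
qed

lemma closed_graph_bounded:
  fixes T :: "'a::{real_normed_vector,complete_space} \<Rightarrow> 'b::{real_normed_vector,complete_space}"
  assumes lin: "linear T"
    and cl: "\<And>x y X. X \<longlonglongrightarrow> x \<Longrightarrow> (\<lambda>n. T (X n)) \<longlonglongrightarrow> y \<Longrightarrow> T x = y"
  shows "bounded_linear T"
proof -
  define S where "S n = closure {x. norm (T x) \<le> real n}" for n
  have "\<exists>n. interior (S n) \<noteq> {}"
  proof (rule ccontr)
    assume "\<not> (\<exists>n. interior (S n) \<noteq> {})"
    then have e: "\<And>n. interior (S n) = {}" by blast
    have "euclidean interior_of \<Union>(range S) = {}"
    proof (rule Baire_category_alt)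
      show "completely_metrizable_space (euclidean::'a topology) \<or> locally_compact_space euclidean \<and> regular_space euclidean"
        by (simp add: completely_metrizable_space_euclidean)
      show "countable (range S)" by simp
      fix U assume "U \<in> range S"
      then obtain m where "U = S m" by blast
      have "closed (S m)" unfolding S_def by (rule closed_closure)
      then show "closedin euclidean U \<and> euclidean interior_of U = {}"
        using e[of m] \<open>U = S m\<close> by (simp add: euclidean_interior_of)
    qed
    moreover have "\<Union>(range S) = UNIV"
    proof -
      have "x \<in> S (nat \<lceil>norm (T x)\<rceil>)" for x
      proof -
        have "norm (T x) \<le> real (nat \<lceil>norm (T x)\<rceil>)" by linarith
        then show ?thesis unfolding S_def by (intro closure_subset[THEN subsetD]) simp
      qed
      then show ?thesis by blast
    qed
    ultimately show False by (simp add: euclidean_interior_of)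
  qed
  then obtain n where "interior (S n) \<noteq> {}" by blast
  then obtain x0 where "x0 \<in> interior (S n)" by blast
  moreover have "open (interior (S n))" by simp
  ultimately obtain r where r1: "r > 0" "ball x0 r \<subseteq> interior (S n)"
    by (meson open_contains_ball)
  then have r: "r > 0" "ball x0 r \<subseteq> S n" using interior_subset by blast+
  have L0: "\<exists>w. norm (T w) \<le> 2 * real n \<and> norm (z - w) < e" if "norm z < r" "e > 0" for z e
  proof -
    have i1: "x0 + z \<in> S n" "x0 \<in> S n" using r that by (auto simp: dist_norm)
    have e2: "e/2 > 0" using that by simp
    obtain a where a: "norm (T a) \<le> real n" "dist a (x0 + z) < e/2"
      using i1(1) e2 unfolding S_def closure_approachable mem_Collect_eq by blast
    obtain b where b: "norm (T b) \<le> real n" "dist b x0 < e/2"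
      using i1(2) e2 unfolding S_def closure_approachable mem_Collect_eq by blast
    have "norm (T (a - b)) \<le> 2 * real n"
      using a b norm_triangle_ineq4[of "T a" "T b"] by (simp add: linear_diff[OF lin])
    moreover have "norm (z - (a - b)) < e"
    proof -
      have "z - (a - b) = (x0 + z - a) - (x0 - b)" by (simp add: algebra_simps)
      then have "norm (z - (a - b)) \<le> norm (x0 + z - a) + norm (x0 - b)"
        by (metis norm_triangle_ineq4)
      then show ?thesis using a b by (simp add: dist_norm norm_minus_commute)
    qed
    ultimately show ?thesis by blast
  qed
  define M where "M = 4 * real n / r"
  have M0: "M \<ge> 0" using r by (simp add: M_def)
  have L: "\<exists>y. norm (T y) \<le> M * norm x \<and> norm (x - y) < e" if e0: "e > 0" for x e
  proof (cases "x = 0")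
    case True
    then show ?thesis using that by (intro exI[of _ 0]) (simp add: linear_0[OF lin])
  next
    case False
    define c where "c = r / (2 * norm x)"
    have c0: "c > 0" using False r by (simp add: c_def)
    have "norm (c *\<^sub>R x) < r" using False r c0 by (simp add: c_def)
    then obtain w where w: "norm (T w) \<le> 2 * real n" "norm (c *\<^sub>R x - w) < c * e"
      using L0[OF _ mult_pos_pos[OF c0 e0]] by blast
    have "norm (T ((1/c) *\<^sub>R w)) = (1/c) * norm (T w)"
      using c0 by (simp add: linear_scale[OF lin])
    also have "\<dots> \<le> (1/c) * (2 * real n)" using w c0 by (simp add: divide_right_mono)
    also have "\<dots> = M * norm x" using False r by (simp add: c_def M_def field_simps)
    finally have 1: "norm (T ((1/c) *\<^sub>R w)) \<le> M * norm x" .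
    have "x - (1/c) *\<^sub>R w = (1/c) *\<^sub>R (c *\<^sub>R x - w)" using c0 by (simp add: algebra_simps)
    then have "norm (x - (1/c) *\<^sub>R w) = (1/c) * norm (c *\<^sub>R x - w)" using c0 by simp
    also have "\<dots> < (1/c) * (c * e)" using w c0 by (simp add: divide_less_eq mult.commute)
    also have "\<dots> = e" using c0 by simp
    finally show ?thesis using 1 by blast
  qed
  define Y where "Y x e = (SOME y. norm (T y) \<le> M * norm x \<and> norm (x - y) < e)" for x e
  have Y: "norm (T (Y x e)) \<le> M * norm x \<and> norm (x - Y x e) < e" if "e > 0" for x e
    unfolding Y_def by (rule someI_ex) (rule L[OF that])
  have bound: "norm (T x) \<le> norm x * (2 * M)" for x
  proof (cases "x = 0")
    case True
    then show ?thesis by (simp add: linear_0[OF lin])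
  next
    case False
    define e where "e k = norm x / 2 ^ Suc k" for k :: nat
    have e0: "e k > 0" for k using False by (simp add: e_def)
    define xs where "xs = rec_nat x (\<lambda>k v. v - Y v (e k))"
    have xs0: "xs 0 = x" and xsS: "xs (Suc k) = xs k - Y (xs k) (e k)" for k
      by (simp_all add: xs_def)
    define y where "y k = Y (xs k) (e k)" for k
    have xsb: "norm (xs k) \<le> norm x / 2 ^ k" for k
    proof (cases k)
      case 0 then show ?thesis by (simp add: xs0)
    next
      case (Suc j)
      have "norm (xs (Suc j)) < e j" using Y[OF e0[of j], of "xs j"] by (simp add: xsS)
      then show ?thesis using Suc by (simp add: e_def)
    qed
    have Tyb: "norm (T (y k)) \<le> M * norm x * (1/2) ^ k" for k
    proof -
      have "norm (T (y k)) \<le> M * norm (xs k)" using Y[OF e0[of k], of "xs k"] by (simp add: y_def)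
      also have "\<dots> \<le> M * (norm x / 2 ^ k)" using mult_left_mono[OF xsb[of k] M0] by simp
      finally show ?thesis by (simp add: power_divide)
    qed
    have tele: "(\<Sum>k<N. y k) = x - xs N" for N
      by (induction N) (simp_all add: xs0 xsS y_def)
    have "xs \<longlonglongrightarrow> 0"
    proof (rule Lim_null_comparison)
      show "\<forall>\<^sub>F k in sequentially. norm (xs k) \<le> norm x * (1/2) ^ k"
        using xsb by (simp add: power_divide)
      show "(\<lambda>k. norm x * (1/2::real) ^ k) \<longlonglongrightarrow> 0"
        by (intro tendsto_mult_right_zero LIMSEQ_realpow_zero) auto
    qed
    then have "(\<lambda>N. x - xs N) \<longlonglongrightarrow> x - 0" by (intro tendsto_diff tendsto_const)
    then have P: "(\<lambda>N. \<Sum>k<N. y k) \<longlonglongrightarrow> x" by (simp add: tele)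
    have sg: "summable (\<lambda>k. M * norm x * (1/2::real) ^ k)"
      by (intro summable_mult summable_geometric) simp
    have "summable (\<lambda>k. norm (T (y k)))"
      by (rule summable_comparison_test[OF _ sg]) (use Tyb in simp)
    then have "summable (\<lambda>k. T (y k))" by (rule my_summable_norm_cancel)
    then have Q: "(\<lambda>N. \<Sum>k<N. T (y k)) \<longlonglongrightarrow> (\<Sum>k. T (y k))" by (rule summable_LIMSEQ)
    have Q': "(\<lambda>N. T (\<Sum>k<N. y k)) \<longlonglongrightarrow> (\<Sum>k. T (y k))"
      using Q by (simp add: linear_sum[OF lin])
    have Tx: "T x = (\<Sum>k. T (y k))" by (rule cl[OF P Q'])
    have sgv: "(\<Sum>k. M * norm x * (1/2::real) ^ k) = M * norm x * 2"
      by (subst suminf_mult) (simp_all add: suminf_geometric)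
    have "norm (\<Sum>k. T (y k)) \<le> M * norm x * 2"
    proof (rule LIMSEQ_le_const2[OF tendsto_norm[OF Q]], intro exI allI impI)
      fix N :: nat
      have "norm (\<Sum>k<N. T (y k)) \<le> (\<Sum>k<N. norm (T (y k)))" by (rule norm_sum)
      also have "\<dots> \<le> (\<Sum>k<N. M * norm x * (1/2::real) ^ k)" by (rule sum_mono) (rule Tyb)
      also have "\<dots> \<le> (\<Sum>k. M * norm x * (1/2::real) ^ k)"
        by (rule sum_le_suminf[OF sg]) (use M0 in auto)
      finally show "norm (\<Sum>k<N. T (y k)) \<le> M * norm x * 2" using sgv by simp
    qed
    then show ?thesis using Tx by (simp add: algebra_simps)
  qed
  show ?thesis
    by (rule bounded_linear.intro[OF lin]) (unfold bounded_linear_axioms_def, use bound in blast)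
qed

theorem lemmaA1:
  fixes A B R :: "'a::{real_inner, complete_space} \<Rightarrow> 'a"
  assumes "bounded_linear A" and "bounded_linear B" and "bounded_linear R"
    and "closed {(f, f'). A f = B f'}"
  shows "(\<exists>T. bounded_linear T \<and>
            rel_inverse (rel_minus_op {(f, f'). A f = B f'} R) = op_graph T)
         \<longleftrightarrow> ({x. A x - B (R x) = 0} = {0} \<and> range B \<subseteq> range (\<lambda>x. A x - B (R x)))"
proof -
  interpret A: bounded_linear A by fact
  interpret B: bounded_linear B by fact
  interpret R: bounded_linear R by fact
  define C where "C x = A x - B (R x)" for x
  have Ceq: "C = (\<lambda>x. A x - B (R x))" by (simp add: C_def fun_eq_iff)
  have Cl: "bounded_linear C"
    unfolding Ceq by (rule bounded_linear_sub[OF assms(1) bounded_linear_compose[OF assms(2,3)]])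
  interpret C: bounded_linear C by (fact Cl)
  have rel: "rel_inverse (rel_minus_op {(f, f'). A f = B f'} R) = {(g, f). C f = B g}"
  proof -
    have "(f, g) \<in> rel_minus_op {(f, f'). A f = B f'} R \<longleftrightarrow> C f = B g" for f g
    proof
      assume "(f, g) \<in> rel_minus_op {(f, f'). A f = B f'} R"
      then obtain f' where "g = f' - R f" "A f = B f'" unfolding rel_minus_op_def by auto
      then show "C f = B g" by (simp add: C_def B.diff)
    next
      assume "C f = B g"
      then have "A f = B (g + R f)" by (simp add: C_def B.add algebra_simps)
      then show "(f, g) \<in> rel_minus_op {(f, f'). A f = B f'} R"
        unfolding rel_minus_op_def by (intro CollectI exI[of _ f] exI[of _ "g + R f"]) auto
    qed
    then show ?thesis unfolding rel_inverse_def by auto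
  qed
  have "(\<exists>T. bounded_linear T \<and> {(g, f). C f = B g} = op_graph T)
        \<longleftrightarrow> ({x. C x = 0} = {0} \<and> range B \<subseteq> range C)"
  proof
    assume "\<exists>T. bounded_linear T \<and> {(g, f). C f = B g} = op_graph T"
    then obtain T where T: "bounded_linear T" "{(g, f). C f = B g} = op_graph T" by blast
    have T0: "T 0 = 0" by (rule linear_0[OF bounded_linear.linear[OF T(1)]])
    have mem: "C f = B g \<longleftrightarrow> f = T g" for f g
    proof -
      have "C f = B g \<longleftrightarrow> (g, f) \<in> op_graph T" using T(2) by blast
      then show ?thesis unfolding op_graph_def by auto
    qed
    have "{x. C x = 0} = {0}"
    proof -
      have "C x = 0 \<longleftrightarrow> x = 0" for x using mem[of x 0] by (simp add: T0 B.zero)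
      then show ?thesis by auto
    qed
    moreover have "range B \<subseteq> range C"
    proof
      fix y assume "y \<in> range B"
      then obtain g where "y = B g" by blast
      then have "C (T g) = y" using mem by blast
      then show "y \<in> range C" by (metis rangeI)
    qed
    ultimately show "{x. C x = 0} = {0} \<and> range B \<subseteq> range C" by blast
  next
    assume H: "{x. C x = 0} = {0} \<and> range B \<subseteq> range C"
    have inj: "f1 = f2" if "C f1 = C f2" for f1 f2
    proof -
      have "C (f1 - f2) = 0" using that by (simp add: C.diff)
      then have "f1 - f2 \<in> {x. C x = 0}" by simp
      then show ?thesis using H by auto
    qed
    have ex: "\<exists>f. C f = B g" for g
    proof -
      have "B g \<in> range C" using H by blast
      then show ?thesis by (metis imageE)
    qed
    define T where "T g = (SOME f. C f = B g)" for g
    have CT: "C (T g) = B g" for g unfolding T_def by (rule someI_ex) (rule ex)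
    have lin: "linear T"
    proof (rule linearI)
      fix a b show "T (a + b) = T a + T b"
        by (rule inj) (simp add: CT C.add B.add)
    next
      fix s a show "T (s *\<^sub>R a) = s *\<^sub>R T a"
        by (rule inj) (simp add: CT C.scale B.scale)
    qed
    have "bounded_linear T"
    proof (rule closed_graph_bounded[OF lin])
      fix x y X assume X: "X \<longlonglongrightarrow> x" and TX: "(\<lambda>n. T (X n)) \<longlonglongrightarrow> y"
      have "(\<lambda>n. C (T (X n))) \<longlonglongrightarrow> C y" by (rule C.tendsto[OF TX])
      moreover have "(\<lambda>n. C (T (X n))) \<longlonglongrightarrow> B x" unfolding CT by (rule B.tendsto[OF X])
      ultimately have "C y = B x" by (rule LIMSEQ_unique)
      then show "T x = y" using CT[of x] inj[of "T x" y] by simp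
    qed
    moreover have "{(g, f). C f = B g} = op_graph T"
    proof -
      have "C f = B g \<longleftrightarrow> f = T g" for f g
        using CT[of g] inj[of f "T g"] by metis
      then show ?thesis unfolding op_graph_def by blast
    qed
    ultimately show "\<exists>T. bounded_linear T \<and> {(g, f). C f = B g} = op_graph T" by blast
  qed
  then show ?thesis unfolding rel Ceq .
qed

end
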